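(* Let $k\ge2$, $n\ge1$ be integers, let $\bar{\mathcal{P}}\in\mathbb{R}^{[k,n]}$ be a columnwise-substochastic tensor, $\mathbf{v}\in\mathbb{R}^n$ a stochastic vector and $\alpha\in[0,1)$. Define the tensor $\mathcal{P}\in\mathbb{R}^{[k,n]}$ by $p_{ii_2\dots i_k}:=\bar p_{ii_2\dots i_k}+v_i\left(1-\sum_{\ell=1}^n\bar p_{\ell i_2\dots i_k}\right)$. If $\mathbf{x}$ solves the MPR problem $$\mathbf{x}=\alpha\mathcal{P}\mathbf{x}^{k-1}+(1-\alpha)\mathbf{v},\quad\mathbf{x}\in\mathbb{R}^n_+,\quad\mathbf{e}^T\mathbf{x}=1,$$ then $\mathbf{y}:=\left(1-\alpha\mathbf{e}^T(\bar{\mathcal{P}}\mathbf{x}^{k-1})\right)^{-\frac{1}{k-1}}\mathbf{x}$ is a nonnegative solution of the MLPPR system $(\mathbf{e}^T\mathbf{y})^{k-2}\mathbf{y}-\alpha\bar{\mathcal{P}}\mathbf{y}^{k-1}=\mathbf{v}$.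
   Context: For $\mathcal{P}\in\mathbb{R}^{[k,n]}$ (real tensors of order $k$, dimension $n$) and $\mathbf{y}\in\mathbb{R}^n$, $(\mathcal{P}\mathbf{y}^{k-1})_i=\sum_{i_2,\dots,i_k}p_{i i_2\dots i_k}y_{i_2}\cdots y_{i_k}$. $\bar{\mathcal{P}}$ is columnwise-substochastic if its entries are nonnegative and $\sum_{i}\bar p_{i i_2\dots i_k}\le1$ for all $i_2,\dots,i_k$. $\mathbf{e}$ is the all-ones vector; a stochastic vector is nonnegative with entries summing to $1$. The tensor $\mathcal{P}$ (the "dangling correction" $\mathcal{P}=\bar{\mathcal{P}}+\mathbf{v}\circ(\mathbf{e}^{\circ(k-1)}-\bar{\mathcal{P}}\bar\times_1\mathbf{e})$) is columnwise-stochastic. *)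

theory Defs
  imports Complex_Main
begin

text \<open>Tensors of order k and dimension n are modelled as functions on index lists
  (i1, ..., ik) with entries in {0..<n}; indices are 0-based.\<close>

definition idx_tuples :: "nat \<Rightarrow> nat \<Rightarrow> nat list set" where
  "idx_tuples n m = {is. length is = m \<and> set is \<subseteq> {..<n}}"

definition tensor_apply :: "nat \<Rightarrow> nat \<Rightarrow> (nat list \<Rightarrow> real) \<Rightarrow> (nat \<Rightarrow> real) \<Rightarrow> nat \<Rightarrow> real" where
  "tensor_apply n k P y i = (\<Sum>is\<in>idx_tuples n (k - 1). P (i # is) * prod_list (map y is))"

definition col_substochastic :: "nat \<Rightarrow> nat \<Rightarrow> (nat list \<Rightarrow> real) \<Rightarrow> bool" where
  "col_substochastic n k P \<longleftrightarrow>
     (\<forall>is\<in>idx_tuples n k. 0 \<le> P is) \<and>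
     (\<forall>js\<in>idx_tuples n (k - 1). (\<Sum>i<n. P (i # js)) \<le> 1)"

definition stochastic_vec :: "nat \<Rightarrow> (nat \<Rightarrow> real) \<Rightarrow> bool" where
  "stochastic_vec n v \<longleftrightarrow> (\<forall>i<n. 0 \<le> v i) \<and> (\<Sum>i<n. v i) = 1"

end

theory Submission
  imports Defs
begin

lemma idx_tuples_Suc:
  "idx_tuples n (Suc m) = (\<lambda>(i,is). i # is) ` ({..<n} \<times> idx_tuples n m)"
  unfolding idx_tuples_def
  by (auto simp: image_iff length_Suc_conv)

lemma idx_tuples_finite: "finite (idx_tuples n m)"
  by (induction m) (auto simp: idx_tuples_Suc, simp add: idx_tuples_def)

lemma sum_prod_tuples:
  "(\<Sum>is\<in>idx_tuples n m. prod_list (map z is)) = (\<Sum>i<n. (z i::real)) ^ m"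
proof (induction m)
  case 0
  have "idx_tuples n 0 = {[]}" by (auto simp: idx_tuples_def)
  then show ?case by simp
next
  case (Suc m)
  have inj: "inj_on (\<lambda>(i,is). i # is) ({..<n} \<times> idx_tuples n m)"
    by (auto simp: inj_on_def)
  have "(\<Sum>is\<in>idx_tuples n (Suc m). prod_list (map z is))
      = (\<Sum>p\<in>{..<n} \<times> idx_tuples n m. z (fst p) * prod_list (map z (snd p)))"
    unfolding idx_tuples_Suc by (subst sum.reindex[OF inj]) (auto intro!: sum.cong)
  also have "\<dots> = (\<Sum>i<n. \<Sum>is\<in>idx_tuples n m. z i * prod_list (map z is))"
    by (simp add: sum.cartesian_product split_def)
  also have "\<dots> = (\<Sum>i<n. z i) * (\<Sum>is\<in>idx_tuples n m. prod_list (map z is))"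
    by (simp only: sum_product)
  finally show ?case using Suc by simp
qed

lemma prod_scale: "prod_list (map (\<lambda>i. (s::real) * x i) is) = s ^ length is * prod_list (map x is)"
  by (induction "is") (simp_all add: mult_ac)

lemma tensor_scale:
  "tensor_apply n k Q (\<lambda>i. s * x i) j = s ^ (k - 1) * tensor_apply n k Q x j"
  unfolding tensor_apply_def sum_distrib_left
  by (rule sum.cong) (auto simp: prod_scale idx_tuples_def)

lemma prod_nonneg_set: "\<forall>i\<in>set js. 0 \<le> (x i::real) \<Longrightarrow> 0 \<le> prod_list (map x js)"
  by (induction js) auto

lemma prod_nonneg_tuple: "\<forall>i<n. 0 \<le> (x i::real) \<Longrightarrow> js \<in> idx_tuples n m \<Longrightarrow> 0 \<le> prod_list (map x js)"
  unfolding idx_tuples_def by (rule prod_nonneg_set) auto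

theorem lemma3p13:
  fixes k n :: nat and Pbar P :: "nat list \<Rightarrow> real" and v x y :: "nat \<Rightarrow> real" and \<alpha> :: real
  assumes "k \<ge> 2" and "n \<ge> 1"
    and "col_substochastic n k Pbar"
    and "stochastic_vec n v"
    and "0 \<le> \<alpha>" and "\<alpha> < 1"
    and P_def: "P = (\<lambda>is. Pbar is + v (hd is) * (1 - (\<Sum>l<n. Pbar (l # tl is))))"
    and x_sol: "\<forall>i<n. x i = \<alpha> * tensor_apply n k P x i + (1 - \<alpha>) * v i"
    and x_nonneg: "\<forall>i<n. 0 \<le> x i"
    and x_sum: "(\<Sum>i<n. x i) = 1"
    and y_def: "y = (\<lambda>i. (1 - \<alpha> * (\<Sum>j<n. tensor_apply n k Pbar x j)) powr (- 1 / real (k - 1)) * x i)"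
  shows "(\<forall>i<n. 0 \<le> y i) \<and>
         (\<forall>i<n. (\<Sum>j<n. y j) ^ (k - 2) * y i - \<alpha> * tensor_apply n k Pbar y i = v i)"
proof -
  define m where "m = k - 1"
  have m1: "m \<ge> 1" and k2: "k - 2 = m - 1" using assms(1) by (auto simp: m_def)
  define c where "c = (\<Sum>j<n. tensor_apply n k Pbar x j)"
  define T where "T = idx_tuples n m"
  have S1: "(\<Sum>is\<in>T. prod_list (map x is)) = 1"
    unfolding T_def sum_prod_tuples x_sum by simp
  have c_eq: "c = (\<Sum>is\<in>T. (\<Sum>j<n. Pbar (j # is)) * prod_list (map x is))"
    unfolding c_def tensor_apply_def m_def[symmetric] T_def
    by (subst sum.swap) (simp add: sum_distrib_right)
  have "c \<le> (\<Sum>is\<in>T. prod_list (map x is))"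
    unfolding c_eq
  proof (rule sum_mono)
    fix js assume "js \<in> T"
    then have "(\<Sum>j<n. Pbar (j # js)) \<le> 1" "0 \<le> prod_list (map x js)"
      using assms(3) prod_nonneg_tuple[OF x_nonneg] unfolding col_substochastic_def T_def m_def
      by auto
    then show "(\<Sum>j<n. Pbar (j # js)) * prod_list (map x js) \<le> prod_list (map x js)"
      using mult_right_mono[of "(\<Sum>j<n. Pbar (j # js))" 1 "prod_list (map x js)"] by simp
  qed
  then have c1: "c \<le> 1" using S1 by simp
  define t where "t = 1 - \<alpha> * c"
  have tpos: "t > 0" unfolding t_def using c1 assms(5,6)
    using mult_left_mono[OF c1 assms(5)] by simp
  define s where "s = t powr (- 1 / real m)"
  have spos: "s > 0" unfolding s_def using tpos by simp
  have sm: "s ^ m = 1 / t"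
  proof -
    have "s ^ m = s powr real m" using spos by (simp add: powr_realpow)
    also have "\<dots> = t powr (- 1 / real m * real m)" unfolding s_def by (simp add: powr_powr)
    also have "\<dots> = 1 / t" using m1 tpos by (simp add: powr_minus_divide)
    finally show ?thesis .
  qed
  have y_eq: "y = (\<lambda>i. s * x i)" unfolding y_def s_def t_def c_def m_def by simp
  have Px: "tensor_apply n k P x i = tensor_apply n k Pbar x i + v i * (1 - c)" for i
  proof -
    have "tensor_apply n k P x i = tensor_apply n k Pbar x i
       + v i * ((\<Sum>is\<in>T. prod_list (map x is)) - (\<Sum>is\<in>T. (\<Sum>j<n. Pbar (j # is)) * prod_list (map x is)))"
      unfolding tensor_apply_def P_def T_def m_def
      by (simp add: algebra_simps sum.distrib sum_distrib_left sum_subtractf)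
    then show ?thesis using S1 c_eq by simp
  qed
  have xi: "x i = \<alpha> * tensor_apply n k Pbar x i + v i * t" if "i < n" for i
    using x_sol that Px unfolding t_def by (simp add: algebra_simps)
  have sumy: "(\<Sum>j<n. y j) = s" unfolding y_eq by (simp add: sum_distrib_left[symmetric] x_sum)
  show ?thesis
  proof (intro conjI allI impI)
    fix i assume "i < n"
    then show "0 \<le> y i" using x_nonneg spos y_eq by simp
  next
    fix i assume i: "i < n"
    have "(\<Sum>j<n. y j) ^ (k - 2) * y i - \<alpha> * tensor_apply n k Pbar y i
        = s ^ m * (x i - \<alpha> * tensor_apply n k Pbar x i)"
    proof -
      have "(\<Sum>j<n. y j) ^ (k - 2) * y i = s ^ m * x i"
        unfolding sumy k2 using m1 y_eq by (cases m) auto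
      moreover have "tensor_apply n k Pbar y i = s ^ m * tensor_apply n k Pbar x i"
        unfolding y_eq tensor_scale m_def ..
      ultimately show ?thesis by (simp add: algebra_simps)
    qed
    also have "\<dots> = v i" using xi[OF i] sm tpos by simp
    finally show "(\<Sum>j<n. y j) ^ (k - 2) * y i - \<alpha> * tensor_apply n k Pbar y i = v i" .
  qed
qed

end
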